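(* Let $A_1,\dots,A_d\in\mathbb{R}^{d\times d}$ be symmetric and define $H^m:\mathbb{R}^d\to\mathbb{R}^d$ and $H^v:\mathbb{R}^d\to\mathbb{R}^{d^2}$ by $$H^m_k(z)=z^{\intercal}A_kz,\qquad H^v_{kl}(z)=(z^{\intercal}A_kz)z_l+z_k(z^{\intercal}A_lz),\quad 1\le k,l\le d.$$ Let $\tilde\rho$ be a probability density on $\mathbb{R}^d$ with all moments finite, $\tilde{\mathbb{E}}$ the expectation with respect to $\tilde\rho$, $\bar H^m=\tilde{\mathbb{E}}[H^m(\tilde Z)]$, $\bar H^v=\tilde{\mathbb{E}}[H^v(\tilde Z)]$, and let $\Gamma_m,\Gamma_v$ be symmetric positive definite matrices of sizes $d\times d$ and $d^2\times d^2$. Define $K^m=\tilde K^m\Gamma_m^{-2}$ and $K^v=\tilde K^v\Gamma_v^{-2}$ with $\tilde K^m(z)\in\mathbb{R}^{d\times d}$, $\tilde K^v(z)\in\mathbb{R}^{d\times d^2}$ given by $$\tilde K^m_{j,k}(z)=\tfrac12 z_j\big[(z^{\intercal}A_kz)-\bar H^m_k\big],\qquad \tilde K^v_{j,kl}(z)=\tfrac13z_j(z^{\intercal}A_kz)z_l+\tfrac13z_j(z^{\intercal}A_lz)z_k-\tfrac13z_j\bar H^v_{kl}.$$ Then for $(K,H,\Gamma)=(K^m,H^m,\Gamma_m)$ and $(K,H,\Gamma)=(K^v,H^v,\Gamma_v)$, $$\tilde{\mathbb{E}}\big[K(\tilde Z)^{\intercal}\nabla H(\tilde Z)\big]=\Gamma^{-2}C^H,\qquad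 C^H=\tilde{\mathbb{E}}\big[(H(\tilde Z)-\bar H)(H(\tilde Z)-\bar H)^{\intercal}\big].$$
   Context: $\tilde Z$ is a random vector with density $\tilde\rho$. For a vector-valued $H$, $\nabla H$ is the matrix $(\nabla H)_{jl}=\partial_{z_j}H_l$, so $(K^{\intercal}\nabla H)_{kl}=\sum_jK_{jk}\partial_{z_j}H_l$. Indices of $H^v$ and of the columns of $\tilde K^v$ run over pairs $(k,l)$, $1\le k,l\le d$. *)

theory Defs
  imports "HOL-Analysis.Analysis"
begin

definition qf :: "('n::finite \<Rightarrow> real^'n^'n) \<Rightarrow> 'n \<Rightarrow> real^'n \<Rightarrow> real" where
  "qf A k z = z \<bullet> (A k *v z)"

definition Hm :: "('n::finite \<Rightarrow> real^'n^'n) \<Rightarrow> real^'n \<Rightarrow> real^'n" where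
  "Hm A z = (\<chi> k. qf A k z)"

definition Hv :: "('n::finite \<Rightarrow> real^'n^'n) \<Rightarrow> real^'n \<Rightarrow> real^('n \<times> 'n)" where
  "Hv A z = (\<chi> p. case p of (k, l) \<Rightarrow> qf A k z * z $ l + z $ k * qf A l z)"

text \<open>Gradient: (grad H z) \$ j \$ l = partial derivative of H_l w.r.t. z_j at z.\<close>
definition grad :: "(real^'n::finite \<Rightarrow> real^'m::finite) \<Rightarrow> real^'n \<Rightarrow> real^'m^'n" where
  "grad H z = (\<chi> j l. deriv (\<lambda>t. H (z + t *\<^sub>R axis j 1) $ l) 0)"

definition Ktm :: "('n::finite \<Rightarrow> real^'n^'n) \<Rightarrow> real^'n \<Rightarrow> real^'n \<Rightarrow> real^'n^'n" where
  "Ktm A Hbar z = (\<chi> j k. (1/2) * z $ j * (qf A k z - Hbar $ k))"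

definition Ktv :: "('n::finite \<Rightarrow> real^'n^'n) \<Rightarrow> real^('n\<times>'n) \<Rightarrow> real^'n \<Rightarrow> real^('n\<times>'n)^'n" where
  "Ktv A Hbar z = (\<chi> j p. case p of (k, l) \<Rightarrow>
      (1/3) * z $ j * qf A k z * z $ l + (1/3) * z $ j * qf A l z * z $ k
      - (1/3) * z $ j * Hbar $ (k, l))"

definition outer :: "real^'m::finite \<Rightarrow> real^'m^'m" where
  "outer v = (\<chi> i j. v $ i * v $ j)"

definition covmat :: "(real^'n::finite) measure \<Rightarrow> (real^'n \<Rightarrow> real^'m::finite) \<Rightarrow> real^'m^'m" where
  "covmat M H = (\<integral>z. outer (H z - (\<integral>w. H w \<partial>M)) \<partial>M)"

definition sym_pos_def_mat :: "real^'m::finite^'m \<Rightarrow> bool" where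
  "sym_pos_def_mat G \<longleftrightarrow> transpose G = G \<and> (\<forall>x. x \<noteq> 0 \<longrightarrow> x \<bullet> (G *v x) > 0)"

end

theory Submission
  imports Defs "HOL-Probability.Probability"
begin

lemma matrix_inv_sym:
  fixes G :: "real^'m::finite^'m"
  assumes "sym_pos_def_mat G"
  shows "transpose (matrix_inv G) = matrix_inv G"
proof -
  have T: "transpose G = G" and P: "\<And>x. x \<noteq> 0 \<Longrightarrow> x \<bullet> (G *v x) > 0"
    using assms unfolding sym_pos_def_mat_def by auto
  have "\<forall>x. G *v x = 0 \<longrightarrow> x = 0"
    using P by (metis inner_zero_right less_irrefl)
  then obtain B where B: "B ** G = mat 1" using matrix_left_invertible_ker by blast
  hence B2: "G ** B = mat 1" using matrix_left_right_inverse by blast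
  have ex: "\<exists>A'. G ** A' = mat 1 \<and> A' ** G = mat 1" using B B2 by blast
  define X where "X = matrix_inv G"
  have X: "G ** X = mat 1 \<and> X ** G = mat 1"
    unfolding X_def matrix_inv_def by (rule someI_ex[OF ex])
  have "transpose (G ** X) = mat 1" using X by simp
  hence XT: "transpose X ** G = mat 1" using T by (simp add: matrix_transpose_mul)
  have "transpose X = transpose X ** (G ** X)" using X by (simp add: matrix_mul_rid)
  also have "\<dots> = X" using XT by (simp add: matrix_mul_assoc matrix_mul_lid)
  finally show ?thesis unfolding X_def .
qed

definition pb :: "(real^'n::finite \<Rightarrow> real) \<Rightarrow> bool" where
  "pb f \<longleftrightarrow> f \<in> borel_measurable borel \<and> (\<exists>C r. \<forall>z. \<bar>f z\<bar> \<le> C * (1 + norm z) ^ r)"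

lemma pb_const: "pb (\<lambda>z. c)"
  unfolding pb_def by (rule conjI, simp, rule exI[of _ "\<bar>c\<bar>"], rule exI[of _ 0], simp)

lemma pb_nth: "pb (\<lambda>z. z $ i)"
  unfolding pb_def
proof
  show "(\<lambda>z. z $ i) \<in> borel_measurable borel"
    by (intro borel_measurable_continuous_onI continuous_intros)
  show "\<exists>C r. \<forall>z. \<bar>z $ i\<bar> \<le> C * (1 + norm z) ^ r"
  proof (intro exI allI)
    fix z :: "real^'a"
    show "\<bar>z $ i\<bar> \<le> 1 * (1 + norm z) ^ 1" using component_le_norm_cart[of z i] by simp
  qed
qed

lemma pb_bound_mono:
  assumes "\<bar>f z\<bar> \<le> C * (1 + norm z) ^ r" "r \<le> s" "C \<le> D"
  shows "\<bar>f z\<bar> \<le> D * (1 + norm (z::real^'n::finite)) ^ s"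
proof -
  have pos: "0 < (1 + norm z) ^ r" by (simp add: add_pos_nonneg)
  have "0 \<le> C * (1 + norm z) ^ r" using assms(1) abs_ge_zero order_trans by blast
  hence C0: "0 \<le> C" using pos by (auto simp: zero_le_mult_iff)
  have "(1 + norm z) ^ r \<le> (1 + norm z) ^ s" by (rule power_increasing[OF assms(2)]) auto
  hence "C * (1 + norm z) ^ r \<le> D * (1 + norm z) ^ s"
    using C0 assms(3) by (intro mult_mono) auto
  thus ?thesis using assms(1) by linarith
qed

lemma pb_add:
  assumes "pb f" "pb g" shows "pb (\<lambda>z. f z + g z)"
proof -
  obtain C r where C: "\<forall>z. \<bar>f z\<bar> \<le> C * (1 + norm z) ^ r" using assms(1) pb_def by blast
  obtain D s where D: "\<forall>z. \<bar>g z\<bar> \<le> D * (1 + norm z) ^ s" using assms(2) pb_def by blast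
  have "\<forall>z. \<bar>f z + g z\<bar> \<le> (\<bar>C\<bar> + \<bar>D\<bar>) * (1 + norm z) ^ (r + s)"
  proof
    fix z
    have "\<bar>f z\<bar> \<le> \<bar>C\<bar> * (1 + norm z) ^ (r + s)" by (rule pb_bound_mono[OF C[rule_format]]) auto
    moreover have "\<bar>g z\<bar> \<le> \<bar>D\<bar> * (1 + norm z) ^ (r + s)" by (rule pb_bound_mono[OF D[rule_format]]) auto
    ultimately show "\<bar>f z + g z\<bar> \<le> (\<bar>C\<bar> + \<bar>D\<bar>) * (1 + norm z) ^ (r + s)"
      by (simp add: distrib_right)
  qed
  thus ?thesis using assms unfolding pb_def by auto
qed

lemma pb_mult:
  assumes "pb f" "pb g" shows "pb (\<lambda>z. f z * g z)"
proof -
  obtain C r where C: "\<forall>z. \<bar>f z\<bar> \<le> C * (1 + norm z) ^ r" using assms(1) pb_def by blast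
  obtain D s where D: "\<forall>z. \<bar>g z\<bar> \<le> D * (1 + norm z) ^ s" using assms(2) pb_def by blast
  have "\<forall>z. \<bar>f z * g z\<bar> \<le> (C * D) * (1 + norm z) ^ (r + s)"
  proof
    fix z
    have "\<bar>f z * g z\<bar> = \<bar>f z\<bar> * \<bar>g z\<bar>" by (simp add: abs_mult)
    also have "\<dots> \<le> (C * (1 + norm z) ^ r) * (D * (1 + norm z) ^ s)"
      using C D by (intro mult_mono) (auto intro: order_trans[OF abs_ge_zero])
    also have "\<dots> = (C * D) * (1 + norm z) ^ (r + s)" by (simp add: power_add)
    finally show "\<bar>f z * g z\<bar> \<le> (C * D) * (1 + norm z) ^ (r + s)" .
  qed
  thus ?thesis using assms unfolding pb_def by auto
qed

lemma pb_diff: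
  assumes "pb f" "pb g" shows "pb (\<lambda>z. f z - g z)"
proof -
  have "pb (\<lambda>z. f z + (-1) * g z)" by (intro pb_add pb_mult pb_const assms)
  thus ?thesis by simp
qed

lemma pb_sum:
  assumes "\<And>i. i \<in> S \<Longrightarrow> pb (f i)" shows "pb (\<lambda>z. \<Sum>i\<in>S. f i z)"
  using assms
proof (induction S rule: infinite_finite_induct)
  case (infinite A) then show ?case by (simp add: pb_const)
next
  case empty then show ?case by (simp add: pb_const)
next
  case (insert x F) then show ?case by (simp add: pb_add)
qed

lemma vec_expand: "(x::real^'m::finite) = (\<Sum>i\<in>UNIV. (x $ i) *\<^sub>R axis i 1)"
  by (simp add: vec_eq_iff axis_def if_distrib cong: if_cong)

lemma mat_expand: "(x::real^'m::finite^'k::finite) = (\<Sum>i\<in>UNIV. \<Sum>j\<in>UNIV. (x $ i $ j) *\<^sub>R axis i (axis j 1))"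
proof -
  have "(\<Sum>i\<in>UNIV. \<Sum>j\<in>UNIV. (x $ i $ j) *\<^sub>R axis i (axis j 1)) = (\<Sum>i\<in>UNIV. axis i (\<Sum>j\<in>UNIV. (x $ i $ j) *\<^sub>R axis j 1))"
    by (rule sum.cong[OF refl]) (simp add: vec_eq_iff axis_def sum_component if_distrib cong: if_cong)
  also have "\<dots> = (\<Sum>i\<in>UNIV. axis i (x $ i))" by (simp add: vec_expand[symmetric])
  also have "\<dots> = x" by (simp add: vec_eq_iff axis_def sum_component if_distrib cong: if_cong)
  finally show ?thesis by simp
qed

lemma integrable_vec:
  fixes f :: "'a \<Rightarrow> real^'m::finite"
  assumes "\<And>i. integrable M (\<lambda>x. f x $ i)"
  shows "integrable M f"
proof -
  have "integrable M (\<lambda>x. \<Sum>i\<in>UNIV. (f x $ i) *\<^sub>R axis i 1)"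
    using assms by (intro Bochner_Integration.integrable_sum Bochner_Integration.integrable_scaleR_left) auto
  thus ?thesis by (subst (asm) vec_expand[symmetric])
qed

lemma integrable_mat:
  fixes f :: "'a \<Rightarrow> real^'m::finite^'k::finite"
  assumes "\<And>i j. integrable M (\<lambda>x. f x $ i $ j)"
  shows "integrable M f"
proof -
  have "integrable M (\<lambda>x. \<Sum>i\<in>UNIV. \<Sum>j\<in>UNIV. (f x $ i $ j) *\<^sub>R axis i (axis j 1))"
    using assms by (intro Bochner_Integration.integrable_sum Bochner_Integration.integrable_scaleR_left) auto
  thus ?thesis by (subst (asm) mat_expand[symmetric])
qed

lemma integral_vec_nth:
  fixes f :: "'a \<Rightarrow> real^'m::finite"
  assumes "integrable M f"
  shows "integral\<^sup>L M f $ i = integral\<^sup>L M (\<lambda>x. f x $ i)"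
  using integral_bounded_linear[OF bounded_linear_vec_nth assms] by simp

lemma integral_mat_nth:
  fixes f :: "'a \<Rightarrow> real^'m::finite^'k::finite"
  assumes "integrable M f"
  shows "integral\<^sup>L M f $ i $ j = integral\<^sup>L M (\<lambda>x. f x $ i $ j)"
proof -
  have "integrable M (\<lambda>x. f x $ i)" by (rule integrable_bounded_linear[OF bounded_linear_vec_nth assms])
  thus ?thesis using integral_bounded_linear[OF bounded_linear_vec_nth assms]
     integral_bounded_linear[OF bounded_linear_vec_nth, of M "\<lambda>x. f x $ i" j] by simp
qed

lemma integrable_poly_norm:
  fixes \<rho> :: "real^'n::finite \<Rightarrow> real"
  assumes moments: "\<And>k::nat. integrable (density lborel (\<lambda>z. ennreal (\<rho> z))) (\<lambda>z. norm z ^ k)"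
  shows "integrable (density lborel (\<lambda>z. ennreal (\<rho> z))) (\<lambda>z. (1 + norm z) ^ r)"
proof -
  have "integrable (density lborel (\<lambda>z. ennreal (\<rho> z)))
      (\<lambda>z. \<Sum>k\<le>r. of_nat (r choose k) * norm z ^ k * 1 ^ (r - k))"
    using moments by (intro Bochner_Integration.integrable_sum Bochner_Integration.integrable_mult_left Bochner_Integration.integrable_mult_right) auto
  moreover have "\<And>z::real^'n. (1 + norm z) ^ r = (\<Sum>k\<le>r. of_nat (r choose k) * norm z ^ k * 1 ^ (r - k))"
    using binomial_ring[of "norm _" 1 r] by (simp add: add.commute)
  ultimately show ?thesis by simp
qed

lemma pb_integrable:
  fixes \<rho> :: "real^'n::finite \<Rightarrow> real"
  assumes moments: "\<And>k::nat. integrable (density lborel (\<lambda>z. ennreal (\<rho> z))) (\<lambda>z. norm z ^ k)"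
    and "pb f"
  shows "integrable (density lborel (\<lambda>z. ennreal (\<rho> z))) f"
proof -
  obtain C r where C: "\<forall>z. \<bar>f z\<bar> \<le> C * (1 + norm z) ^ r" and m: "f \<in> borel_measurable borel"
    using assms(2) pb_def by blast
  show ?thesis
  proof (rule Bochner_Integration.integrable_bound)
    show "integrable (density lborel (\<lambda>z. ennreal (\<rho> z))) (\<lambda>z. C * (1 + norm z) ^ r)"
      using integrable_poly_norm[OF moments] by (rule Bochner_Integration.integrable_mult_right)
    show "f \<in> borel_measurable (density lborel (\<lambda>z. ennreal (\<rho> z)))" using m by simp
    show "AE x in density lborel (\<lambda>z. ennreal (\<rho> z)). norm (f x) \<le> norm (C * (1 + norm x) ^ r)"
      using C by (intro AE_I2) (auto intro: order_trans[OF _ abs_ge_self])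
  qed
qed


definition bq :: "('n::finite \<Rightarrow> real^'n^'n) \<Rightarrow> 'n \<Rightarrow> real^'n \<Rightarrow> real^'n \<Rightarrow> real" where
  "bq A l z e = e \<bullet> (A l *v z) + z \<bullet> (A l *v e)"

lemma qf_line: "qf A l (z + t *\<^sub>R e) = qf A l z + t * bq A l z e + t^2 * (e \<bullet> (A l *v e))"
  unfolding qf_def bq_def
  by (simp add: matrix_vector_right_distrib matrix_vector_mult_scaleR inner_add_left inner_add_right
      algebra_simps power2_eq_square)

lemma qf_deriv: "((\<lambda>t. qf A l (z + t *\<^sub>R e)) has_real_derivative bq A l z e) (at 0)"
proof -
  have "((\<lambda>t. qf A l z + t * bq A l z e + t^2 * (e \<bullet> (A l *v e))) has_real_derivative bq A l z e) (at 0)"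
    by (auto intro!: derivative_eq_intros)
  thus ?thesis by (simp add: qf_line)
qed

lemma nth_deriv: "((\<lambda>t. (z + t *\<^sub>R e) $ l) has_real_derivative e $ l) (at 0)"
proof -
  have "((\<lambda>t. z $ l + t * e $ l) has_real_derivative e $ l) (at 0)"
    by (auto intro!: derivative_eq_intros)
  thus ?thesis by simp
qed

lemma l1: "(\<Sum>j\<in>UNIV. z $ j * (axis j 1 \<bullet> w)) = z \<bullet> (w::real^'n::finite)"
  unfolding inner_axis' by (simp add: inner_vec_def)

lemma l2: "z \<bullet> ((B::real^'n::finite^'n) *v axis j 1) = (\<Sum>i\<in>UNIV. z$i * B$i$j)"
  by (simp add: inner_vec_def matrix_vector_mult_def axis_def if_distrib cong: if_cong)

lemma l3: "(\<Sum>j\<in>UNIV. z $ j * (z \<bullet> ((B::real^'n::finite^'n) *v axis j 1))) = z \<bullet> (B *v z)"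
proof -
  have "(\<Sum>j\<in>UNIV. z $ j * (z \<bullet> (B *v axis j 1))) = (\<Sum>j\<in>UNIV. \<Sum>i\<in>UNIV. z $ i * (B $ i $ j * z $ j))"
    by (simp add: l2 sum_distrib_left sum_distrib_right algebra_simps)
  also have "\<dots> = (\<Sum>i\<in>UNIV. \<Sum>j\<in>UNIV. z $ i * (B $ i $ j * z $ j))" by (rule sum.swap)
  also have "\<dots> = z \<bullet> (B *v z)"
    by (simp add: inner_vec_def matrix_vector_mult_def sum_distrib_left)
  finally show ?thesis .
qed

lemma l4: "(\<Sum>j\<in>UNIV. z $ j * axis j (1::real) $ l) = z $ l"
  by (simp add: axis_def if_distrib cong: if_cong)

lemma sum_bq: "(\<Sum>j\<in>UNIV. z $ j * bq A l z (axis j 1)) = 2 * qf A l z"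
  unfolding bq_def qf_def by (simp add: distrib_left sum.distrib l1 l3)

lemma grad_Hm: "grad (Hm A) z $ j $ l = bq A l z (axis j 1)"
  unfolding grad_def Hm_def by (simp add: DERIV_imp_deriv[OF qf_deriv])

lemma grad_Hv: "grad (Hv A) z $ j $ (k, l) =
   bq A k z (axis j 1) * z $ l + qf A k z * axis j 1 $ l + axis j 1 $ k * qf A l z + z $ k * bq A l z (axis j 1)"
proof -
  have d: "((\<lambda>t. qf A k (z + t *\<^sub>R axis j 1) * (z + t *\<^sub>R axis j 1) $ l
      + (z + t *\<^sub>R axis j 1) $ k * qf A l (z + t *\<^sub>R axis j 1)) has_real_derivative
     (qf A k (z + 0 *\<^sub>R axis j 1) * axis j 1 $ l + bq A k z (axis j 1) * (z + 0 *\<^sub>R axis j 1) $ l)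
     + ((z + 0 *\<^sub>R axis j 1) $ k * bq A l z (axis j 1) + axis j 1 $ k * qf A l (z + 0 *\<^sub>R axis j 1))) (at 0)"
    by (intro DERIV_add DERIV_mult'[OF qf_deriv nth_deriv] DERIV_mult'[OF nth_deriv qf_deriv])
  show ?thesis
    unfolding grad_def Hv_def using DERIV_imp_deriv[OF d] by (simp add: algebra_simps)
qed

lemma euler_Hm: "(\<Sum>j\<in>UNIV. z $ j * grad (Hm A) z $ j $ l) = 2 * Hm A z $ l"
  by (simp add: grad_Hm sum_bq Hm_def)

lemma euler_Hv: "(\<Sum>j\<in>UNIV. z $ j * grad (Hv A) z $ j $ p) = 3 * Hv A z $ p"
proof (cases p)
  case (Pair k l)
  have "(\<Sum>j\<in>UNIV. z $ j * grad (Hv A) z $ j $ (k,l)) =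
     (\<Sum>j\<in>UNIV. z $ j * bq A k z (axis j 1)) * z $ l + qf A k z * (\<Sum>j\<in>UNIV. z $ j * axis j 1 $ l)
     + (\<Sum>j\<in>UNIV. z $ j * axis j 1 $ k) * qf A l z + z $ k * (\<Sum>j\<in>UNIV. z $ j * bq A l z (axis j 1))"
    by (simp add: grad_Hv distrib_left sum.distrib sum_distrib_left sum_distrib_right algebra_simps)
  also have "\<dots> = 3 * Hv A z $ (k,l)"
    by (simp add: sum_bq l4 Hv_def algebra_simps)
  finally show ?thesis using Pair by simp
qed


lemma main_abs:
  fixes H :: "real^'n::finite \<Rightarrow> real^'m::finite"
    and Kt :: "real^'n \<Rightarrow> real^'m^'n"
    and G :: "real^'m^'m"
    and \<rho> :: "real^'n \<Rightarrow> real"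
  assumes rho_meas: "\<rho> \<in> borel_measurable lborel"
    and rho_prob: "(\<integral>\<^sup>+ z. ennreal (\<rho> z) \<partial>lborel) = 1"
    and moments: "\<And>k::nat. integrable (density lborel (\<lambda>z. ennreal (\<rho> z))) (\<lambda>z. norm z ^ k)"
    and pbH: "\<And>k. pb (\<lambda>z. H z $ k)"
    and GT: "transpose G = G"
    and KG: "\<And>z k l. (transpose (Kt z) ** grad H z) $ k $ l
        = (H z $ k - (\<integral>w. H w \<partial>density lborel (\<lambda>z. ennreal (\<rho> z))) $ k) * H z $ l"
  shows "(\<integral>z. transpose (Kt z ** G) ** grad H z \<partial>density lborel (\<lambda>z. ennreal (\<rho> z)))
     = G ** covmat (density lborel (\<lambda>z. ennreal (\<rho> z))) H"
proof -
  define M where "M = density lborel (\<lambda>z. ennreal (\<rho> z))"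
  define Hb where "Hb = (\<integral>w. H w \<partial>M)"
  have rm: "(\<lambda>z. ennreal (\<rho> z)) \<in> borel_measurable lborel" using rho_meas by measurable
  have "emeasure M (space M) = (\<integral>\<^sup>+ z. ennreal (\<rho> z) * indicator (space lborel) z \<partial>lborel)"
    unfolding M_def space_density by (rule emeasure_density[OF rm]) simp
  also have "\<dots> = 1" using rho_prob by simp
  finally have prob: "prob_space M" by (rule prob_spaceI)
  have intg: "pb f \<Longrightarrow> integrable M f" for f unfolding M_def by (rule pb_integrable[OF moments])
  have intH: "integrable M H" by (intro integrable_vec intg pbH)
  have Hb_k: "Hb $ k = (\<integral>z. H z $ k \<partial>M)" for k unfolding Hb_def by (rule integral_vec_nth[OF intH])
  define P where "P z = (\<chi> k l. (H z $ k - Hb $ k) * H z $ l)" for z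
  have eq1: "transpose (Kt z ** G) ** grad H z = G ** P z" for z
  proof -
    have "transpose (Kt z) ** grad H z = P z"
      using KG unfolding P_def Hb_def M_def by (simp add: vec_eq_iff)
    thus ?thesis by (simp add: matrix_transpose_mul GT matrix_mul_assoc[symmetric])
  qed
  have ent: "(G ** P z) $ i $ l = (\<Sum>k\<in>UNIV. G $ i $ k * ((H z $ k - Hb $ k) * H z $ l))" for z i l
    by (simp add: P_def matrix_matrix_mult_def)
  have pbP: "pb (\<lambda>z. (H z $ k - Hb $ k) * H z $ l)" for k l
    by (intro pb_mult pb_diff pbH pb_const)
  have intGP: "integrable M (\<lambda>z. G ** P z)"
    by (rule integrable_mat, unfold ent) (intro intg pb_sum pb_mult pb_const pbP)
  have pbO: "pb (\<lambda>z. (H z $ k - Hb $ k) * (H z $ l - Hb $ l))" for k l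
    by (intro pb_mult pb_diff pbH pb_const)
  have intO: "integrable M (\<lambda>z. outer (H z - Hb))"
    by (rule integrable_mat) (simp add: outer_def, intro intg pbO)
  have key: "(\<integral>z. (H z $ k - Hb $ k) * H z $ l \<partial>M) = (\<integral>z. (H z $ k - Hb $ k) * (H z $ l - Hb $ l) \<partial>M)" for k l
  proof -
    have iHk: "integrable M (\<lambda>z. H z $ k)" by (intro intg pbH)
    interpret P: prob_space M by (rule prob)
    have z0: "(\<integral>z. (H z $ k - Hb $ k) \<partial>M) = 0"
      using iHk by (simp add: Hb_k Bochner_Integration.integral_diff P.prob_space)
    have "(\<lambda>z. (H z $ k - Hb $ k) * H z $ l) = (\<lambda>z. (H z $ k - Hb $ k) * (H z $ l - Hb $ l) + (H z $ k - Hb $ k) * Hb $ l)"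
      by (simp add: algebra_simps)
    hence "(\<integral>z. (H z $ k - Hb $ k) * H z $ l \<partial>M) = (\<integral>z. (H z $ k - Hb $ k) * (H z $ l - Hb $ l) \<partial>M)
        + (\<integral>z. (H z $ k - Hb $ k) * Hb $ l \<partial>M)"
      using intg[OF pbO] intg[OF pb_mult[OF pb_diff[OF pbH pb_const] pb_const]]
      by (simp add: Bochner_Integration.integral_add)
    also have "(\<integral>z. (H z $ k - Hb $ k) * Hb $ l \<partial>M) = 0"
      using z0 by simp
    finally show ?thesis by simp
  qed
  have "(\<integral>z. transpose (Kt z ** G) ** grad H z \<partial>M) = (\<integral>z. G ** P z \<partial>M)"
    by (simp add: eq1)
  also have "\<dots> = G ** covmat M H"
  proof (simp add: vec_eq_iff, intro allI)
    fix i l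
    have "(\<integral>z. G ** P z \<partial>M) $ i $ l = (\<integral>z. (\<Sum>k\<in>UNIV. G $ i $ k * ((H z $ k - Hb $ k) * H z $ l)) \<partial>M)"
      by (simp add: integral_mat_nth[OF intGP] ent)
    also have "\<dots> = (\<Sum>k\<in>UNIV. G $ i $ k * (\<integral>z. (H z $ k - Hb $ k) * H z $ l \<partial>M))"
      using intg[OF pbP] by (simp add: Bochner_Integration.integral_sum)
    also have "\<dots> = (\<Sum>k\<in>UNIV. G $ i $ k * covmat M H $ k $ l)"
      unfolding covmat_def Hb_def[symmetric] using integral_mat_nth[OF intO]
      by (simp add: key outer_def)
    also have "\<dots> = (G ** covmat M H) $ i $ l" by (simp add: matrix_matrix_mult_def)
    finally show "(\<integral>z. G ** P z \<partial>M) $ i $ l = (G ** covmat M H) $ i $ l" .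
  qed
  finally show ?thesis unfolding M_def .
qed


lemma pb_qf: "pb (\<lambda>z. qf A k z)"
proof -
  have "pb (\<lambda>z. \<Sum>i\<in>UNIV. z $ i * (\<Sum>j\<in>UNIV. A k $ i $ j * z $ j))"
    by (intro pb_sum pb_mult pb_nth pb_const)
  moreover have "(\<lambda>z. qf A k z) = (\<lambda>z. \<Sum>i\<in>UNIV. z $ i * (\<Sum>j\<in>UNIV. A k $ i $ j * z $ j))"
    by (simp add: qf_def inner_vec_def matrix_vector_mult_def)
  ultimately show ?thesis by simp
qed

lemma pb_Hm: "pb (\<lambda>z. Hm A z $ k)"
  by (simp add: Hm_def pb_qf)

lemma pb_Hv: "pb (\<lambda>z. Hv A z $ p)"
proof (cases p)
  case (Pair k l)
  show ?thesis unfolding Pair Hv_def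
    by (simp, intro pb_add pb_mult pb_qf pb_nth)
qed

lemma tmul_nth: "(transpose X ** Y) $ k $ l = (\<Sum>j\<in>UNIV. X $ j $ k * Y $ j $ l)"
  by (simp add: matrix_matrix_mult_def transpose_def)

lemma KG_m: "(transpose (Ktm A Hb z) ** grad (Hm A) z) $ k $ l = (Hm A z $ k - Hb $ k) * Hm A z $ l"
proof -
  have "(transpose (Ktm A Hb z) ** grad (Hm A) z) $ k $ l
     = (\<Sum>j\<in>UNIV. ((1/2) * (qf A k z - Hb $ k)) * (z $ j * grad (Hm A) z $ j $ l))"
    unfolding tmul_nth by (intro sum.cong) (simp_all add: Ktm_def algebra_simps)
  also have "\<dots> = (1/2) * (qf A k z - Hb $ k) * (\<Sum>j\<in>UNIV. z $ j * grad (Hm A) z $ j $ l)"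
    by (simp add: sum_distrib_left)
  also have "\<dots> = (Hm A z $ k - Hb $ k) * Hm A z $ l"
    by (simp add: euler_Hm Hm_def)
  finally show ?thesis .
qed

lemma KG_v: "(transpose (Ktv A Hb z) ** grad (Hv A) z) $ p $ q = (Hv A z $ p - Hb $ p) * Hv A z $ q"
proof (cases p)
  case (Pair k l)
  have K: "Ktv A Hb z $ j $ (k, l) = (1/3) * z $ j * (Hv A z $ (k, l) - Hb $ (k, l))" for j
    by (simp add: Ktv_def Hv_def algebra_simps)
  have "(transpose (Ktv A Hb z) ** grad (Hv A) z) $ (k, l) $ q
     = (\<Sum>j\<in>UNIV. ((1/3) * (Hv A z $ (k, l) - Hb $ (k, l))) * (z $ j * grad (Hv A) z $ j $ q))"
    unfolding tmul_nth by (intro sum.cong) (simp_all add: K algebra_simps)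
  also have "\<dots> = (1/3) * (Hv A z $ (k, l) - Hb $ (k, l)) * (\<Sum>j\<in>UNIV. z $ j * grad (Hv A) z $ j $ q)"
    by (simp add: sum_distrib_left)
  also have "\<dots> = (Hv A z $ (k, l) - Hb $ (k, l)) * Hv A z $ q"
    by (simp add: euler_Hv)
  finally show ?thesis using Pair by simp
qed

lemma GG_sym:
  assumes "sym_pos_def_mat \<Gamma>"
  shows "transpose (matrix_inv \<Gamma> ** matrix_inv \<Gamma>) = matrix_inv \<Gamma> ** matrix_inv (\<Gamma>::real^'m::finite^'m)"
  by (simp add: matrix_transpose_mul matrix_inv_sym[OF assms])

theorem proposition5p1:
  fixes A :: "'n::finite \<Rightarrow> real^'n^'n"
    and \<rho> :: "real^'n \<Rightarrow> real"
    and \<Gamma>m :: "real^'n^'n"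
    and \<Gamma>v :: "real^('n\<times>'n)^('n\<times>'n)"
  assumes symA: "\<And>k. transpose (A k) = A k"
    and rho_meas: "\<rho> \<in> borel_measurable lborel"
    and rho_nonneg: "\<And>z. \<rho> z \<ge> 0"
    and rho_prob: "(\<integral>\<^sup>+ z. ennreal (\<rho> z) \<partial>lborel) = 1"
    and moments: "\<And>k::nat. integrable (density lborel (\<lambda>z. ennreal (\<rho> z))) (\<lambda>z. norm z ^ k)"
    and Gm: "sym_pos_def_mat \<Gamma>m"
    and Gv: "sym_pos_def_mat \<Gamma>v"
  shows
   "(let M = density lborel (\<lambda>z. ennreal (\<rho> z));
         Hbm = (\<integral>z. Hm A z \<partial>M);
         Km = (\<lambda>z. Ktm A Hbm z ** (matrix_inv \<Gamma>m ** matrix_inv \<Gamma>m))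
     in (\<integral>z. transpose (Km z) ** grad (Hm A) z \<partial>M)
          = (matrix_inv \<Gamma>m ** matrix_inv \<Gamma>m) ** covmat M (Hm A))
    \<and> (let M = density lborel (\<lambda>z. ennreal (\<rho> z));
         Hbv = (\<integral>z. Hv A z \<partial>M);
         Kv = (\<lambda>z. Ktv A Hbv z ** (matrix_inv \<Gamma>v ** matrix_inv \<Gamma>v))
     in (\<integral>z. transpose (Kv z) ** grad (Hv A) z \<partial>M)
          = (matrix_inv \<Gamma>v ** matrix_inv \<Gamma>v) ** covmat M (Hv A))"
  unfolding Let_def
  using main_abs[OF rho_meas rho_prob moments pb_Hm GG_sym[OF Gm] KG_m]
        main_abs[OF rho_meas rho_prob moments pb_Hv GG_sym[OF Gv] KG_v]
  by blast

end
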